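(* Let $\mathcal{U}\subseteq\mathcal{E}$ be any dead-ending universe. Then $\mathcal{D}(\mathcal{U}\cap\mathcal{L})=\mathcal{U}$.
   Context: Games are finite partizan games. A universe is a set of games closed under options, disjunctive sums, conjugates (swapping roles of Left and Right), and forming $\{\mathscr{G}^L\mid\mathscr{G}^R\}$ from nonempty finite subsets of it. $\mathcal{D}(\mathcal{A})$ denotes the smallest universe containing $\mathcal{A}$. A Left (Right) end has no Left (Right) option; a Left (Right) dead-end is a game all of whose subpositions are Left (Right) ends; $\mathcal{L}$ is the set of Left dead-ends. $\mathcal{E}$ is the set of games every end-subposition of which is a (Left or Right) dead-end; a universe contained in $\mathcal{E}$ is dead-ending. *)

theory Defs
  imports Main "HOL-Library.FSet"
begin

datatype game = Game (lefts: "game fset") (rights: "game fset")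

lemma size_lefts: "x |\<in>| lefts g \<Longrightarrow> size x < size g"
proof (cases g)
  case (Game L R)
  assume "x |\<in>| lefts g"
  then have "x \<in> fset L" using Game by simp
  then have "Suc (size x) \<le> (\<Sum>y\<in>fset L. Suc (size y))"
    by (intro member_le_sum) auto
  then show ?thesis using Game by simp
qed

lemma size_rights: "x |\<in>| rights g \<Longrightarrow> size x < size g"
proof (cases g)
  case (Game L R)
  assume "x |\<in>| rights g"
  then have "x \<in> fset R" using Game by simp
  then have "Suc (size x) \<le> (\<Sum>y\<in>fset R. Suc (size y))"
    by (intro member_le_sum) auto
  then show ?thesis using Game by simp
qed

function gsum :: "game \<Rightarrow> game \<Rightarrow> game" where
  "gsum g h = Game
     ((\<lambda>x. gsum x h) |`| lefts g |\<union>| (\<lambda>y. gsum g y) |`| lefts h)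
     ((\<lambda>x. gsum x h) |`| rights g |\<union>| (\<lambda>y. gsum g y) |`| rights h)"
  by auto
termination
  by (relation "measure (\<lambda>(g, h). size g + size h)")
     (auto dest: size_lefts size_rights)

primrec conjugate :: "game \<Rightarrow> game" where
  "conjugate (Game L R) = Game (conjugate |`| R) (conjugate |`| L)"

definition is_option :: "game \<Rightarrow> game \<Rightarrow> bool" where
  "is_option x g \<longleftrightarrow> x |\<in>| lefts g \<or> x |\<in>| rights g"

inductive subpos :: "game \<Rightarrow> game \<Rightarrow> bool" where
  refl: "subpos g g"
| step: "subpos h g \<Longrightarrow> is_option x h \<Longrightarrow> subpos x g"

definition universe :: "game set \<Rightarrow> bool" where
  "universe U \<longleftrightarrow>
     (\<forall>g\<in>U. \<forall>x. is_option x g \<longrightarrow> x \<in> U) \<and>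
     (\<forall>g\<in>U. \<forall>h\<in>U. gsum g h \<in> U) \<and>
     (\<forall>g\<in>U. conjugate g \<in> U) \<and>
     (\<forall>A B. A \<noteq> {||} \<and> B \<noteq> {||} \<and> fset A \<subseteq> U \<and> fset B \<subseteq> U \<longrightarrow> Game A B \<in> U)"

definition univ_closure :: "game set \<Rightarrow> game set" ("\<D>") where
  "\<D> A = \<Inter> {U. universe U \<and> A \<subseteq> U}"

definition left_end :: "game \<Rightarrow> bool" where
  "left_end g \<longleftrightarrow> lefts g = {||}"

definition right_end :: "game \<Rightarrow> bool" where
  "right_end g \<longleftrightarrow> rights g = {||}"

definition left_dead_end :: "game \<Rightarrow> bool" where
  "left_dead_end g \<longleftrightarrow> (\<forall>h. subpos h g \<longrightarrow> left_end h)"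

definition right_dead_end :: "game \<Rightarrow> bool" where
  "right_dead_end g \<longleftrightarrow> (\<forall>h. subpos h g \<longrightarrow> right_end h)"

definition Ldead :: "game set" where
  "Ldead = {g. left_dead_end g}"

definition Edead :: "game set" where
  "Edead = {g. \<forall>h. subpos h g \<longrightarrow> (left_end h \<or> right_end h) \<longrightarrow>
                    left_dead_end h \<or> right_dead_end h}"

definition dead_ending :: "game set \<Rightarrow> bool" where
  "dead_ending U \<longleftrightarrow> universe U \<and> U \<subseteq> Edead"

end

theory Submission
  imports Defs
begin

lemma lefts_conj: "lefts (conjugate g) = conjugate |`| rights g"
  by (cases g) simp

lemma rights_conj: "rights (conjugate g) = conjugate |`| lefts g"
  by (cases g) simp

lemma conj_conj: "conjugate (conjugate g) = g"
proof (induction g rule: measure_induct_rule[of size])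
  case (less g)
  obtain L R where g: "g = Game L R" by (cases g)
  have "fimage (conjugate \<circ> conjugate) L = L"
    using less size_lefts[of _ g] g by (intro fset_eqI) (auto simp: fimage_iff)
  moreover have "fimage (conjugate \<circ> conjugate) R = R"
    using less size_rights[of _ g] g by (intro fset_eqI) (auto simp: fimage_iff)
  ultimately show ?case using g by (simp add: fset.map_comp)
qed

lemma subpos_conj_aux: "subpos h k \<Longrightarrow> k = conjugate g \<Longrightarrow> \<exists>h'. subpos h' g \<and> h = conjugate h'"
proof (induction h k rule: subpos.induct)
  case (refl k)
  have "subpos g g" by (rule subpos.refl)
  then show ?case using refl by blast
next
  case (step h k x)
  from step.IH step.prems obtain h' where h': "subpos h' g" "h = conjugate h'" by blast
  have "is_option x (conjugate h')" using step.hyps(2) h'(2) by simp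
  then have "x |\<in>| conjugate |`| rights h' \<or> x |\<in>| conjugate |`| lefts h'"
    unfolding is_option_def lefts_conj rights_conj .
  then obtain y where y: "is_option y h'" "x = conjugate y"
    unfolding is_option_def by blast
  have "subpos y g" using h'(1) y(1) by (rule subpos.step)
  then show ?case using y(2) by blast
qed

lemma subpos_conj: "subpos h (conjugate g) \<Longrightarrow> \<exists>h'. subpos h' g \<and> h = conjugate h'"
  using subpos_conj_aux by blast

lemma rde_conj: "right_dead_end g \<Longrightarrow> left_dead_end (conjugate g)"
  unfolding right_dead_end_def left_dead_end_def left_end_def right_end_def
proof (intro allI impI)
  fix h assume a: "\<forall>h. subpos h g \<longrightarrow> rights h = {||}" and "subpos h (conjugate g)"
  then obtain h' where h': "subpos h' g" "h = conjugate h'" using subpos_conj by blast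
  have "rights h' = {||}" using a h'(1) by blast
  then show "lefts h = {||}" unfolding h'(2) lefts_conj by simp
qed

lemma univ_opt: "universe U \<Longrightarrow> g \<in> U \<Longrightarrow> is_option x g \<Longrightarrow> x \<in> U"
proof -
  assume u: "universe U" "g \<in> U" "is_option x g"
  from u(1) have "\<forall>g\<in>U. \<forall>x. is_option x g \<longrightarrow> x \<in> U" unfolding universe_def by (rule conjunct1)
  then show "x \<in> U" using \<open>g \<in> U\<close> \<open>is_option x g\<close> by blast
qed

lemma univ_conj: "universe U \<Longrightarrow> g \<in> U \<Longrightarrow> conjugate g \<in> U"
proof -
  assume u: "universe U" "g \<in> U"
  from u(1) have "\<forall>g\<in>U. conjugate g \<in> U" unfolding universe_def by (elim conjE)
  then show "conjugate g \<in> U" using \<open>g \<in> U\<close> by blast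
qed

lemma univ_game: "universe U \<Longrightarrow> A \<noteq> {||} \<Longrightarrow> B \<noteq> {||} \<Longrightarrow> fset A \<subseteq> U \<Longrightarrow> fset B \<subseteq> U \<Longrightarrow> Game A B \<in> U"
proof -
  assume a: "universe U" "A \<noteq> {||}" "B \<noteq> {||}" "fset A \<subseteq> U" "fset B \<subseteq> U"
  from a(1) have "\<forall>A B. A \<noteq> {||} \<and> B \<noteq> {||} \<and> fset A \<subseteq> U \<and> fset B \<subseteq> U \<longrightarrow> Game A B \<in> U"
    unfolding universe_def by (elim conjE)
  then show "Game A B \<in> U" using a by blast
qed

lemma main_incl:
  assumes U: "universe U" "U \<subseteq> Edead" and V: "universe V" "U \<inter> Ldead \<subseteq> V"
  shows "g \<in> U \<Longrightarrow> g \<in> V"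
proof (induction g rule: measure_induct_rule[of size])
  case (less g)
  have opts: "x \<in> V" if "is_option x g" for x
  proof -
    have "x \<in> U" using univ_opt[OF U(1) less(2) that] .
    moreover have "size x < size g" using that size_lefts size_rights
      unfolding is_option_def by blast
    ultimately show ?thesis using less(1) by blast
  qed
  show ?case
  proof (cases "lefts g = {||} \<or> rights g = {||}")
    case False
    have "fset (lefts g) \<subseteq> V" "fset (rights g) \<subseteq> V"
      using opts unfolding is_option_def by auto
    then have "Game (lefts g) (rights g) \<in> V"
      using univ_game[OF V(1)] False by blast
    then show ?thesis by (cases g) simp
  next
    case True
    have "g \<in> Edead" using U(2) less(2) by blast
    then have "left_dead_end g \<or> right_dead_end g"
      unfolding Edead_def left_end_def right_end_def using True subpos.refl by blast
    then show ?thesis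
    proof
      assume "left_dead_end g"
      then show ?thesis using V(2) less(2) unfolding Ldead_def by blast
    next
      assume "right_dead_end g"
      then have "left_dead_end (conjugate g)" by (rule rde_conj)
      moreover have "conjugate g \<in> U" using univ_conj[OF U(1) less(2)] .
      ultimately have "conjugate g \<in> V" using V(2) unfolding Ldead_def by blast
      then have "conjugate (conjugate g) \<in> V" using univ_conj[OF V(1)] by blast
      then show ?thesis by (simp add: conj_conj)
    qed
  qed
qed

theorem mainTheorem10:
  assumes "universe U" and "U \<subseteq> Edead"
  shows "\<D> (U \<inter> Ldead) = U"
proof
  show "\<D> (U \<inter> Ldead) \<subseteq> U" using assms(1) unfolding univ_closure_def by blast
  show "U \<subseteq> \<D> (U \<inter> Ldead)" unfolding univ_closure_def
    using main_incl[OF assms] by blast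
qed

end
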